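(* Let $S=S_1+S_2$ be the gluing of affine semigroups $S_1,S_2\subset\mathbb N^r$ along $\alpha$. Fix $j\in\{1,2\}$ and $b,b'\in S_j$. Then $b-b'\in S_j$ if and only if $b-b'\in S$.
   Context: $S=S_1+S_2$ is the gluing of $S_1$ and $S_2$ if there is $\alpha\in S_1\cap S_2$ with $\mathbb Z S_1\cap\mathbb Z S_2=\mathbb Z\alpha$, where $\mathbb Z S_j$ is the subgroup of $\mathbb Z^r$ generated by $S_j$. *)

theory Defs
  imports "HOL-Analysis.Finite_Cartesian_Product"
begin

text \<open>Points of Z^r are vectors of type int^'n (r = CARD('n)).\<close>

definition natpts :: "(int ^ 'n) set" where
  "natpts = {v. \<forall>i. 0 \<le> v $ i}"

inductive_set monoid_gen :: "'a::monoid_add set \<Rightarrow> 'a set" for A where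
  zero: "0 \<in> monoid_gen A"
| add: "a \<in> A \<Longrightarrow> x \<in> monoid_gen A \<Longrightarrow> a + x \<in> monoid_gen A"

inductive_set group_gen :: "'a::ab_group_add set \<Rightarrow> 'a set" for A where
  zero: "0 \<in> group_gen A"
| add: "a \<in> A \<Longrightarrow> x \<in> group_gen A \<Longrightarrow> a + x \<in> group_gen A"
| sub: "a \<in> A \<Longrightarrow> x \<in> group_gen A \<Longrightarrow> x - a \<in> group_gen A"

definition affine_semigroup :: "(int ^ 'n) set \<Rightarrow> bool" where
  "affine_semigroup S \<longleftrightarrow> (\<exists>A. finite A \<and> A \<subseteq> natpts \<and> S = monoid_gen A)"

definition gluing :: "(int ^ 'n) set \<Rightarrow> (int ^ 'n) set \<Rightarrow> (int ^ 'n) set \<Rightarrow> int ^ 'n \<Rightarrow> bool" where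
  "gluing S S1 S2 \<alpha> \<longleftrightarrow>
     S = {x + y | x y. x \<in> S1 \<and> y \<in> S2} \<and> \<alpha> \<in> S1 \<inter> S2 \<and>
     group_gen S1 \<inter> group_gen S2 = group_gen {\<alpha>}"

end

theory Submission
  imports Defs
begin

lemma mg_add: "x \<in> monoid_gen A \<Longrightarrow> y \<in> monoid_gen A \<Longrightarrow> x + y \<in> monoid_gen A"
proof (induction x rule: monoid_gen.induct)
  case zero
  then show ?case by simp
next
  case (add a x)
  have "x + y \<in> monoid_gen A" using add.IH add.prems by blast
  then have "a + (x + y) \<in> monoid_gen A" by (rule monoid_gen.add[OF add.hyps(1)])
  then show ?case by (simp add: add.assoc)
qed

lemma mg_nat: assumes "A \<subseteq> natpts" and "x \<in> monoid_gen A" shows "x \<in> natpts"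
  using assms(2)
proof (induction x rule: monoid_gen.induct)
  case zero
  then show ?case by (simp add: natpts_def)
next
  case (add a x)
  then have "a \<in> natpts" using assms(1) by blast
  then show ?case using add.IH by (simp add: natpts_def)
qed

lemma gg_mem: "a \<in> A \<Longrightarrow> a \<in> group_gen A"
  using group_gen.add[OF _ group_gen.zero, of a A] by simp

lemma gg_closed: "y \<in> group_gen A \<Longrightarrow> x \<in> group_gen A \<Longrightarrow> x + y \<in> group_gen A \<and> x - y \<in> group_gen A"
proof (induction y arbitrary: x rule: group_gen.induct)
  case zero
  then show ?case by simp
next
  case (add a y)
  have e1: "x + (a + y) = a + (x + y)" by (simp add: algebra_simps)
  have e2: "x - (a + y) = (x - y) - a" by (simp add: algebra_simps)
  have m1: "a + (x + y) \<in> group_gen A" using add by (simp add: group_gen.add)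
  have m2: "(x - y) - a \<in> group_gen A" using add by (simp add: group_gen.sub)
  show ?case unfolding e1 e2 using m1 m2 by blast
next
  case (sub a y)
  have e1: "x + (y - a) = (x + y) - a" by (simp add: algebra_simps)
  have e2: "x - (y - a) = a + (x - y)" by (simp add: algebra_simps)
  have m1: "(x + y) - a \<in> group_gen A" using sub by (simp add: group_gen.sub)
  have m2: "a + (x - y) \<in> group_gen A" using sub by (simp add: group_gen.add)
  show ?case unfolding e1 e2 using m1 m2 by blast
qed

lemma gg_single: "y \<in> group_gen {\<alpha>} \<Longrightarrow> \<exists>k::int. \<forall>i. y $ i = k * (\<alpha> :: int ^ 'n) $ i"
proof (induction y rule: group_gen.induct)
  case zero
  show ?case by (rule exI[of _ 0]) simp
next
  case (add a x)
  then obtain k where k: "\<forall>i. x $ i = k * \<alpha> $ i" by blast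
  have a: "a = \<alpha>" using add.hyps by simp
  have "\<forall>i. (a + x) $ i = (k + 1) * \<alpha> $ i"
  proof
    fix i show "(a + x) $ i = (k + 1) * \<alpha> $ i" using k a by (simp add: distrib_right)
  qed
  then show ?case by blast
next
  case (sub a x)
  then obtain k where k: "\<forall>i. x $ i = k * \<alpha> $ i" by blast
  have a: "a = \<alpha>" using sub.hyps by simp
  have "\<forall>i. (x - a) $ i = (k - 1) * \<alpha> $ i"
  proof
    fix i show "(x - a) $ i = (k - 1) * \<alpha> $ i" using k a by (simp add: left_diff_distrib)
  qed
  then show ?case by blast
qed

lemma mult_in: "\<alpha> \<in> monoid_gen A \<Longrightarrow> \<forall>i. y $ i = int n * (\<alpha> :: int ^ 'n) $ i \<Longrightarrow> y \<in> monoid_gen A"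
proof (induction n arbitrary: y)
  case 0
  then have "y = 0" by (simp add: vec_eq_iff)
  then show ?case by (simp add: monoid_gen.zero)
next
  case (Suc n)
  have h: "\<forall>i. (y - \<alpha>) $ i = int n * \<alpha> $ i"
  proof
    fix i have "y $ i = (int n + 1) * \<alpha> $ i" using Suc.prems(2) by simp
    then show "(y - \<alpha>) $ i = int n * \<alpha> $ i" by (simp add: distrib_right)
  qed
  have "y - \<alpha> \<in> monoid_gen A" using Suc.IH[OF Suc.prems(1) h] .
  then have "\<alpha> + (y - \<alpha>) \<in> monoid_gen A" using Suc.prems(1) mg_add by blast
  then show ?case by simp
qed

lemma core:
  fixes \<alpha> b b' :: "int ^ 'n"
  assumes T: "T = monoid_gen A" and U: "U = monoid_gen B" and B: "B \<subseteq> natpts"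
    and A: "A \<subseteq> natpts" and al: "\<alpha> \<in> T"
    and g: "group_gen T \<inter> group_gen U = group_gen {\<alpha>}" and b: "b \<in> T" "b' \<in> T"
  shows "b - b' \<in> T \<longleftrightarrow> (\<exists>x y. b - b' = x + y \<and> x \<in> T \<and> y \<in> U)"
proof
  assume "b - b' \<in> T"
  then show "\<exists>x y. b - b' = x + y \<and> x \<in> T \<and> y \<in> U"
    using U by (intro exI[of _ "b - b'"] exI[of _ 0]) (simp add: monoid_gen.zero)
next
  assume "\<exists>x y. b - b' = x + y \<and> x \<in> T \<and> y \<in> U"
  then obtain x y where xy: "b - b' = x + y" "x \<in> T" "y \<in> U" by blast
  have yeq: "y = (b - x) - b'" using xy(1) by (simp add: algebra_simps)
  have "b - x \<in> group_gen T" using gg_closed[OF gg_mem[OF xy(2)] gg_mem[OF b(1)]] by blast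
  then have "(b - x) - b' \<in> group_gen T" using gg_closed[OF gg_mem[OF b(2)]] by blast
  then have "y \<in> group_gen T" by (simp only: yeq)
  moreover have "y \<in> group_gen U" using gg_mem[OF xy(3)] .
  ultimately have "y \<in> group_gen {\<alpha>}" using g by blast
  then obtain k where k: "\<forall>i. y $ i = k * \<alpha> $ i" using gg_single by blast
  show "b - b' \<in> T"
  proof (cases "k \<ge> 0")
    case True
    then have "\<forall>i. y $ i = int (nat k) * \<alpha> $ i" using k by simp
    then have "y \<in> T" using mult_in[of \<alpha> A y "nat k"] al unfolding T by blast
    then have "x + y \<in> T" using xy(2) mg_add[of x A y] unfolding T by blast
    then show ?thesis using xy(1) by simp
  next
    case False
    have an: "\<alpha> \<in> natpts" using mg_nat[OF A] al unfolding T by blast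
    have yn: "y \<in> natpts" using mg_nat[OF B] xy(3) unfolding U by blast
    have "\<forall>i. y $ i = 0"
    proof
      fix i
      have "0 \<le> \<alpha> $ i" "0 \<le> y $ i" using an yn by (auto simp: natpts_def)
      moreover have "k * \<alpha> $ i \<le> 0" using False \<open>0 \<le> \<alpha> $ i\<close> by (simp add: mult_nonpos_nonneg)
      ultimately show "y $ i = 0" using k by (metis order_antisym)
    qed
    then have "y = 0" by (simp add: vec_eq_iff)
    then show ?thesis using xy by simp
  qed
qed

theorem lemma3p5:
  fixes S S1 S2 :: "(int ^ 'n) set" and \<alpha> :: "int ^ 'n" and j :: nat and b b' :: "int ^ 'n"
  assumes "affine_semigroup S1" and "affine_semigroup S2"
    and "gluing S S1 S2 \<alpha>"
    and "j \<in> {1, 2}"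
    and "b \<in> (if j = 1 then S1 else S2)" and "b' \<in> (if j = 1 then S1 else S2)"
  shows "b - b' \<in> (if j = 1 then S1 else S2) \<longleftrightarrow> b - b' \<in> S"
proof -
  obtain A1 where A1: "A1 \<subseteq> natpts" "S1 = monoid_gen A1" using assms(1) unfolding affine_semigroup_def by blast
  obtain A2 where A2: "A2 \<subseteq> natpts" "S2 = monoid_gen A2" using assms(2) unfolding affine_semigroup_def by blast
  have Sd: "S = {x + y | x y. x \<in> S1 \<and> y \<in> S2}" and al: "\<alpha> \<in> S1" "\<alpha> \<in> S2"
    and g: "group_gen S1 \<inter> group_gen S2 = group_gen {\<alpha>}"
    using assms(3) unfolding gluing_def by auto
  show ?thesis
  proof (cases "j = 1")
    case True
    have "b - b' \<in> S1 \<longleftrightarrow> (\<exists>x y. b - b' = x + y \<and> x \<in> S1 \<and> y \<in> S2)"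
      using core[OF A1(2) A2(2) A2(1) A1(1) al(1) g] assms(5,6) True by simp
    then show ?thesis using True Sd by auto
  next
    case False
    have g2: "group_gen S2 \<inter> group_gen S1 = group_gen {\<alpha>}" using g by blast
    have "b - b' \<in> S2 \<longleftrightarrow> (\<exists>x y. b - b' = x + y \<and> x \<in> S2 \<and> y \<in> S1)"
      using core[OF A2(2) A1(2) A1(1) A2(1) al(2) g2] assms(5,6) False by simp
    also have "\<dots> \<longleftrightarrow> b - b' \<in> S"
    proof
      assume "\<exists>x y. b - b' = x + y \<and> x \<in> S2 \<and> y \<in> S1"
      then obtain x y where "b - b' = y + x" "x \<in> S2" "y \<in> S1" by (auto simp: add.commute)
      then show "b - b' \<in> S" using Sd by blast
    next
      assume "b - b' \<in> S"
      then obtain x y where "b - b' = y + x" "x \<in> S2" "y \<in> S1" using Sd by blast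
      then show "\<exists>x y. b - b' = x + y \<and> x \<in> S2 \<and> y \<in> S1" by (metis add.commute)
    qed
    finally show ?thesis using False by simp
  qed
qed

end
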